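(* Let $n\ge2$, $\ell\ge1$, and $\lambda,\mu\in P_n$ with $\lambda-\mu\equiv\sum_{i=1}^n\ell_i\epsilon_i$ modulo $\mathbb C\epsilon$ for nonnegative integers $\ell_1,\dots,\ell_n$ with $\sum_i\ell_i=\ell$. Let $u_{\lambda,\mu}\in F_\lambda(M(\mu))$ be the image of $v_\mu\otimes u_1^{\otimes\ell_1}\otimes\cdots\otimes u_n^{\otimes\ell_n}$, and let $\bar y_i$ be the operator on $F_\lambda(M(\mu))$ induced by $y_i$. Then for each $i=1,\dots,\ell$, $$\bar y_iu_{\lambda,\mu}=\zeta_i\,u_{\lambda,\mu},$$ where, for $\sum_{k<m}\ell_k<i\le\sum_{k\le m}\ell_k$, $\zeta_i=\mu'_m+i-\sum_{k<m}\ell_k-1$ with $\mu'_m=\langle\mu+\rho,\epsilon^\vee_m\rangle$.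
   Context: $\mathfrak{sl}_n=\mathfrak n_+\oplus\mathfrak h_n\oplus\mathfrak n_-$ standard; $\epsilon_i$ the $i$-th diagonal coordinate, $\epsilon=\sum_i\epsilon_i$; $\mathfrak h_n^*$ is identified with $\{\sum\lambda_i\epsilon_i:\sum\lambda_i=0\}\subset\mathfrak t_n^*=\bigoplus\mathbb C\epsilon_i$, with $\epsilon_i^\vee$ the dual basis of $\mathfrak t_n$; $\rho=\sum_i\frac{n-2i+1}{2}\epsilon_i$; $P_n$ is the integral weight lattice. $M(\mu)$ is the Verma module with highest weight vector $v_\mu$; $V_n=\mathbb C^n$ with standard basis $u_1,\dots,u_n$ ($u_i$ of weight the restriction of $\epsilon_i$ to $\mathfrak h_n$). $F_\lambda(X)=H_0(\mathfrak n_-,X\otimes V_n^{\otimes\ell})_\lambda=(X\otimes V_n^{\otimes\ell}/\mathfrak n_-(X\otimes V_n^{\otimes\ell}))_\lambda$. With $(x|y)=\mathrm{tr}(xy)$, $\Omega=\sum_a x_a\otimes x^a$ for dual bases, $\Omega_{ij}$ acting in tensor factors $i,j$ of $X\otimes V_n^{\otimes\ell}$ (factor $0$ is $X$), the operators $y_i=\Omega_{0i}+\sum_{1\le j<i}(\Omega_{ji}+\frac1n)+\frac{n-1}2$ commute with $\mathfrak{sl}_n$ and thus induce operators $\bar y_i$ on $F_\lambda(X)$. *)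

theory Defs
  imports Complex_Main "HOL-Library.Function_Algebras"
begin

text \<open>Elements of gl_n are matrices nat => nat => complex with indices in {1..n}
 (entries outside are zero).  sl_n is the trace-zero part.\<close>

type_synonym mat = "nat \<Rightarrow> nat \<Rightarrow> complex"

definition mat_on :: "nat \<Rightarrow> mat \<Rightarrow> bool" where
  "mat_on n x \<longleftrightarrow> (\<forall>i j. x i j \<noteq> 0 \<longrightarrow> i \<in> {1..n} \<and> j \<in> {1..n})"

definition sl :: "nat \<Rightarrow> mat set" where
  "sl n = {x. mat_on n x \<and> (\<Sum>i=1..n. x i i) = 0}"

definition E :: "nat \<Rightarrow> nat \<Rightarrow> mat" where
  "E a b = (\<lambda>i j. if i = a \<and> j = b then 1 else 0)"

definition Id_n :: "nat \<Rightarrow> mat" where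
  "Id_n n = (\<lambda>i j. if i = j \<and> i \<in> {1..n} then 1 else 0)"

text \<open>The trace-zero projection E_ab - delta_ab/n I; with these,
 Omega = sum_{a,b} Ebar_ab (x) Ebar_ba is the Casimir tensor of sl_n
 for the trace form (x|y) = tr(xy).\<close>
definition Ebar :: "nat \<Rightarrow> nat \<Rightarrow> nat \<Rightarrow> mat" where
  "Ebar n a b = (\<lambda>i j. E a b i j - (if a = b then Id_n n i j / of_nat n else 0))"

definition mat_mult :: "nat \<Rightarrow> mat \<Rightarrow> mat \<Rightarrow> mat" where
  "mat_mult n x y = (\<lambda>i j. \<Sum>k=1..n. x i k * y k j)"

definition bracket :: "nat \<Rightarrow> mat \<Rightarrow> mat \<Rightarrow> mat" where
  "bracket n x y = (\<lambda>i j. mat_mult n x y i j - mat_mult n y x i j)"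

definition diag :: "(nat \<Rightarrow> complex) \<Rightarrow> mat" where
  "diag d = (\<lambda>i j. if i = j then d i else 0)"

definition sl_rep ::
  "nat \<Rightarrow> (complex \<Rightarrow> 'x::ab_group_add \<Rightarrow> 'x) \<Rightarrow> (mat \<Rightarrow> 'x \<Rightarrow> 'x) \<Rightarrow> bool" where
  "sl_rep n scale act \<longleftrightarrow>
     vector_space scale \<and>
     (\<forall>x\<in>sl n. \<forall>v w. act x (v + w) = act x v + act x w) \<and>
     (\<forall>x\<in>sl n. \<forall>c v. act x (scale c v) = scale c (act x v)) \<and>
     (\<forall>x\<in>sl n. \<forall>y\<in>sl n. \<forall>v. act (\<lambda>i j. x i j + y i j) v = act x v + act y v) \<and>
     (\<forall>x\<in>sl n. \<forall>c v. act (\<lambda>i j. c * x i j) v = scale c (act x v)) \<and>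
     (\<forall>x\<in>sl n. \<forall>y\<in>sl n. \<forall>v.
        act (bracket n x y) v = act x (act y v) - act y (act x v))"

text \<open>Integral weights of sl_n, realised as sum-zero vectors (lambda_1,...,lambda_n)
 in the span of the epsilon_i.\<close>
definition weight :: "nat \<Rightarrow> (nat \<Rightarrow> complex) \<Rightarrow> bool" where
  "weight n \<mu> \<longleftrightarrow> (\<Sum>i=1..n. \<mu> i) = 0"

definition integral_weight :: "nat \<Rightarrow> (nat \<Rightarrow> complex) \<Rightarrow> bool" where
  "integral_weight n \<mu> \<longleftrightarrow> weight n \<mu> \<and>
     (\<forall>i\<in>{1..n}. \<forall>j\<in>{1..n}. \<mu> i - \<mu> j \<in> \<int>)"

definition rho :: "nat \<Rightarrow> nat \<Rightarrow> complex" where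
  "rho n i = (of_int (int n - 2 * int i + 1)) / 2"

text \<open>Negative roots (a,b) with a > b, in a fixed order, for the PBW basis.\<close>
definition negroots :: "nat \<Rightarrow> (nat \<times> nat) list" where
  "negroots n = concat (map (\<lambda>a. map (\<lambda>b. (a, b)) [1..<a]) [1..<n+1])"

definition pbw_monomial ::
  "nat \<Rightarrow> (mat \<Rightarrow> 'x \<Rightarrow> 'x) \<Rightarrow> 'x \<Rightarrow> (nat \<times> nat \<Rightarrow> nat) \<Rightarrow> 'x" where
  "pbw_monomial n act v k =
     foldr (\<lambda>(a, b) z. (act (E a b) ^^ k (a, b)) z) (negroots n) v"

definition pbw_exps :: "nat \<Rightarrow> (nat \<times> nat \<Rightarrow> nat) set" where
  "pbw_exps n = {k. \<forall>r. r \<notin> set (negroots n) \<longrightarrow> k r = 0}"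

text \<open>(scale, act, v) is the Verma module M(mu): v is a highest weight vector
 of weight mu and the PBW monomials in the f_ab = E_ab (a > b) applied to v
 form a basis, i.e. U(n_-) -> M(mu), u |-> u v is a linear isomorphism.\<close>
definition is_verma ::
  "nat \<Rightarrow> (complex \<Rightarrow> 'x::ab_group_add \<Rightarrow> 'x) \<Rightarrow> (mat \<Rightarrow> 'x \<Rightarrow> 'x) \<Rightarrow> 'x
     \<Rightarrow> (nat \<Rightarrow> complex) \<Rightarrow> bool" where
  "is_verma n scale act v \<mu> \<longleftrightarrow>
     sl_rep n scale act \<and>
     (\<forall>a\<in>{1..n}. \<forall>b\<in>{1..n}. a < b \<longrightarrow> act (E a b) v = 0) \<and>
     (\<forall>d. diag d \<in> sl n \<longrightarrow> act (diag d) v = scale (\<Sum>k=1..n. d k * \<mu> k) v) \<and>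
     inj_on (pbw_monomial n act v) (pbw_exps n) \<and>
     \<not> module.dependent scale (pbw_monomial n act v ` pbw_exps n) \<and>
     module.span scale (pbw_monomial n act v ` pbw_exps n) = UNIV"

text \<open>X (x) V_n^{(x) l} is identified with functions from words w (lists of length l
 with entries in {1..n}) to X: F corresponds to sum_w F(w) (x) u_{w_1} (x) ... (x) u_{w_l}.
 Functions are taken to vanish off words.\<close>

definition words :: "nat \<Rightarrow> nat \<Rightarrow> nat list set" where
  "words n l = {w. length w = l \<and> set w \<subseteq> {1..n}}"

type_synonym 'x tens = "nat list \<Rightarrow> 'x"

definition scaleT :: "(complex \<Rightarrow> 'x \<Rightarrow> 'x) \<Rightarrow> complex \<Rightarrow> 'x tens \<Rightarrow> 'x tens" where
  "scaleT scale c F = (\<lambda>w. scale c (F w))"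

definition fac0 :: "nat \<Rightarrow> nat \<Rightarrow> (mat \<Rightarrow> 'x::ab_group_add \<Rightarrow> 'x) \<Rightarrow> mat \<Rightarrow> 'x tens \<Rightarrow> 'x tens" where
  "fac0 n l act x F = (\<lambda>w. if w \<in> words n l then act x (F w) else 0)"

text \<open>x acting in tensor factor j (1 <= j <= l), a copy of V_n:
 x u_b = sum_a x_ab u_a.\<close>
definition facV :: "nat \<Rightarrow> nat \<Rightarrow> (complex \<Rightarrow> 'x::ab_group_add \<Rightarrow> 'x) \<Rightarrow> nat \<Rightarrow> mat \<Rightarrow> 'x tens \<Rightarrow> 'x tens" where
  "facV n l scale j x F = (\<lambda>w. if w \<in> words n l
       then (\<Sum>b=1..n. scale (x (w ! (j - 1)) b) (F (w[j - 1 := b]))) else 0)"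

definition actT :: "nat \<Rightarrow> nat \<Rightarrow> (complex \<Rightarrow> 'x::ab_group_add \<Rightarrow> 'x) \<Rightarrow> (mat \<Rightarrow> 'x \<Rightarrow> 'x)
     \<Rightarrow> mat \<Rightarrow> 'x tens \<Rightarrow> 'x tens" where
  "actT n l scale act x F = fac0 n l act x F + (\<Sum>j=1..l. facV n l scale j x F)"

definition Omega0 :: "nat \<Rightarrow> nat \<Rightarrow> (complex \<Rightarrow> 'x::ab_group_add \<Rightarrow> 'x) \<Rightarrow> (mat \<Rightarrow> 'x \<Rightarrow> 'x)
     \<Rightarrow> nat \<Rightarrow> 'x tens \<Rightarrow> 'x tens" where
  "Omega0 n l scale act i F =
     (\<Sum>a=1..n. \<Sum>b=1..n. fac0 n l act (Ebar n a b) (facV n l scale i (Ebar n b a) F))"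

definition OmegaV :: "nat \<Rightarrow> nat \<Rightarrow> (complex \<Rightarrow> 'x::ab_group_add \<Rightarrow> 'x)
     \<Rightarrow> nat \<Rightarrow> nat \<Rightarrow> 'x tens \<Rightarrow> 'x tens" where
  "OmegaV n l scale j i F =
     (\<Sum>a=1..n. \<Sum>b=1..n. facV n l scale j (Ebar n a b) (facV n l scale i (Ebar n b a) F))"

definition yop :: "nat \<Rightarrow> nat \<Rightarrow> (complex \<Rightarrow> 'x::ab_group_add \<Rightarrow> 'x) \<Rightarrow> (mat \<Rightarrow> 'x \<Rightarrow> 'x)
     \<Rightarrow> nat \<Rightarrow> 'x tens \<Rightarrow> 'x tens" where
  "yop n l scale act i F =
     Omega0 n l scale act i F
     + (\<Sum>j\<in>{1..<i}. OmegaV n l scale j i F + scaleT scale (1 / of_nat n) F)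
     + scaleT scale ((of_nat n - 1) / 2) F"

definition nminus_image :: "nat \<Rightarrow> nat \<Rightarrow> (complex \<Rightarrow> 'x::ab_group_add \<Rightarrow> 'x) \<Rightarrow> (mat \<Rightarrow> 'x \<Rightarrow> 'x)
     \<Rightarrow> 'x tens set" where
  "nminus_image n l scale act =
     module.span (scaleT scale)
       {actT n l scale act (E a b) F | a b F. a \<in> {1..n} \<and> b \<in> {1..n} \<and> b < a}"

text \<open>Equality of images in H_0(n_-, X (x) V^{(x) l}) = (X (x) V^{(x) l}) / n_-(...).\<close>
definition coinv_eq :: "nat \<Rightarrow> nat \<Rightarrow> (complex \<Rightarrow> 'x::ab_group_add \<Rightarrow> 'x) \<Rightarrow> (mat \<Rightarrow> 'x \<Rightarrow> 'x)
     \<Rightarrow> 'x tens \<Rightarrow> 'x tens \<Rightarrow> bool" where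
  "coinv_eq n l scale act F G \<longleftrightarrow> F - G \<in> nminus_image n l scale act"

definition std_word :: "nat \<Rightarrow> (nat \<Rightarrow> nat) \<Rightarrow> nat list" where
  "std_word n ls = concat (map (\<lambda>m. replicate (ls m) m) [1..<n+1])"

definition u_vec :: "nat \<Rightarrow> (nat \<Rightarrow> nat) \<Rightarrow> 'x::zero \<Rightarrow> 'x tens" where
  "u_vec n ls v = (\<lambda>w. if w = std_word n ls then v else 0)"

end

theory Submission imports Defs begin

definition sng :: "nat list \<Rightarrow> 'x::zero \<Rightarrow> 'x tens" where
  "sng w y = (\<lambda>w'. if w' = w then y else 0)"

lemma sum_fun_apply: "(\<Sum>a\<in>A. f a) x = (\<Sum>a\<in>A. f a x)"
  by (induct A rule: infinite_finite_induct) auto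

lemma sng_add: "sng w (a + b) = sng w a + sng w (b::'x::monoid_add)"
  by (auto simp: sng_def fun_eq_iff)
lemma sng_diff: "sng w (a - b) = sng w a - sng w (b::'x::ab_group_add)"
  by (auto simp: sng_def fun_eq_iff)
lemma sng_zero[simp]: "sng w 0 = (0::'x::zero tens)"
  by (auto simp: sng_def fun_eq_iff)
lemma sng_sum: "sng w (\<Sum>a\<in>A. f a) = (\<Sum>a\<in>A. sng w (f a::'x::comm_monoid_add))"
  by (induct A rule: infinite_finite_induct) (auto simp: sng_add)

lemma Ebar_val: "c \<in> {1..n} \<Longrightarrow> Ebar n b a c d =
   (if b = c \<and> a = d then 1 else 0) - (if a = b \<and> c = d then 1 / of_nat n else 0)"
  unfolding Ebar_def E_def Id_n_def by (cases "b = a"; cases "c = d"; cases "c = b"; cases "d = a"; simp)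

lemma ifmul: "(if P then x else 0) * (if Q then y else 0) = (if P \<and> Q then x*y else (0::complex))"
  by simp

lemma dd: "x\<in>{1..(n::nat)} \<Longrightarrow> y\<in>{1..n} \<Longrightarrow> (\<Sum>a=1..n. \<Sum>b=1..n. if a = x \<and> b = y \<and> Q then z else 0) = (if Q then z else (0::complex))"
proof (cases Q)
  case True
  assume a: "x\<in>{1..(n::nat)}" "y\<in>{1..n}"
  have "(\<Sum>a=1..n. \<Sum>b=1..n. if a = x \<and> b = y \<and> Q then z else 0) = (\<Sum>a=1..n. if a = x then (\<Sum>b=1..n. if b = y then z else 0) else (0::complex))"
    using True by (intro sum.cong refl) simp
  also have "\<dots> = z" using a by (simp only: sum.delta finite_atLeastAtMost if_True)
  finally show ?thesis using True by simp
qed simp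

lemma dd2: "(\<Sum>a=1..(n::nat). \<Sum>b=1..n. if b = a \<and> Q then z else 0) = (if Q then of_nat n * z else (0::complex))"
  by (cases Q) (simp_all add: sum.delta')

lemma CI: assumes "c \<in> {1..n}" "d \<in> {1..n}" "r \<in> {1..n}" "m \<in> {1..n}"
  shows "(\<Sum>a=1..n. \<Sum>b=1..n. Ebar n a b d r * Ebar n b a c m) =
   (if d = m \<and> c = r then 1 else 0) - (if d = r \<and> c = m then 1 / of_nat n else 0)"
proof -
  have n: "n \<ge> 1" using assms by auto
  have e: "\<And>A1 B1 A2 B2::complex. (A1 - B1) * (A2 - B2) = A1*A2 - A1*B2 - B1*A2 + B1*B2"
    by (simp add: algebra_simps)
  have "(\<Sum>a=1..n. \<Sum>b=1..n. Ebar n a b d r * Ebar n b a c m) =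
    (\<Sum>a=1..n. \<Sum>b=1..n. ((if a = d \<and> b = r then 1 else 0) - (if b = a \<and> d = r then 1 / of_nat n else 0))
       * ((if b = c \<and> a = m then 1 else 0) - (if a = b \<and> c = m then 1 / of_nat n else 0)))"
    using assms by (simp add: Ebar_val)
  also have "\<dots> = (\<Sum>a=1..n. \<Sum>b=1..n. (if (a = d \<and> b = r) \<and> (b = c \<and> a = m) then 1 * 1 else 0)
      - (if (a = d \<and> b = r) \<and> (a = b \<and> c = m) then 1 * (1 / of_nat n) else 0)
      - (if (b = a \<and> d = r) \<and> (b = c \<and> a = m) then 1 / of_nat n * 1 else 0)
      + (if (b = a \<and> d = r) \<and> (a = b \<and> c = m) then 1 / of_nat n * (1 / of_nat n) else 0))"
    unfolding e ifmul ..
  also have "\<dots> = (if d = m \<and> c = r then 1 else 0) - (if d = r \<and> c = m then 1 / of_nat n else 0)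
      - (if d = r \<and> c = m then 1 / of_nat n else 0) + (if d = r \<and> c = m then of_nat n * (1 / of_nat n * (1 / of_nat n)) else 0)"
  proof -
    have h1: "(\<Sum>a=1..n. \<Sum>b=1..n. (if (a = d \<and> b = r) \<and> (b = c \<and> a = m) then 1 * 1 else 0)) = (if d = m \<and> c = r then (1::complex) else 0)"
    proof -
      have "(\<Sum>a=1..n. \<Sum>b=1..n. (if (a = d \<and> b = r) \<and> (b = c \<and> a = m) then 1 * 1 else 0)) = (\<Sum>a=1..n. \<Sum>b=1..n. (if a = d \<and> b = r \<and> (d = m \<and> c = r) then (1::complex) else 0))"
        by (intro sum.cong refl if_cong) auto
      then show ?thesis using assms by (simp only: dd)
    qed
    have h2: "(\<Sum>a=1..n. \<Sum>b=1..n. (if (a = d \<and> b = r) \<and> (a = b \<and> c = m) then 1 * (1 / of_nat n) else 0)) = (if d = r \<and> c = m then 1 / of_nat n else (0::complex))"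
    proof -
      have "(\<Sum>a=1..n. \<Sum>b=1..n. (if (a = d \<and> b = r) \<and> (a = b \<and> c = m) then 1 * (1 / of_nat n) else 0)) = (\<Sum>a=1..n. \<Sum>b=1..n. (if a = d \<and> b = r \<and> (d = r \<and> c = m) then 1 / of_nat n else (0::complex)))"
        by (intro sum.cong refl if_cong) auto
      then show ?thesis using assms by (simp only: dd)
    qed
    have h3: "(\<Sum>a=1..n. \<Sum>b=1..n. (if (b = a \<and> d = r) \<and> (b = c \<and> a = m) then 1 / of_nat n * 1 else 0)) = (if d = r \<and> c = m then 1 / of_nat n else (0::complex))"
    proof -
      have "(\<Sum>a=1..n. \<Sum>b=1..n. (if (b = a \<and> d = r) \<and> (b = c \<and> a = m) then 1 / of_nat n * 1 else 0)) = (\<Sum>a=1..n. \<Sum>b=1..n. (if a = m \<and> b = c \<and> (d = r \<and> c = m) then 1 / of_nat n else (0::complex)))"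
        by (intro sum.cong refl if_cong) auto
      then show ?thesis using assms by (simp only: dd)
    qed
    have h4: "(\<Sum>a=1..n. \<Sum>b=1..n. (if (b = a \<and> d = r) \<and> (a = b \<and> c = m) then 1 / of_nat n * (1 / of_nat n) else 0)) = (if d = r \<and> c = m then of_nat n * (1 / of_nat n * (1 / of_nat n)) else (0::complex))"
    proof -
      have "(\<Sum>a=1..n. \<Sum>b=1..n. (if (b = a \<and> d = r) \<and> (a = b \<and> c = m) then 1 / of_nat n * (1 / of_nat n) else 0)) = (\<Sum>a=1..n. \<Sum>b=1..n. (if b = a \<and> (d = r \<and> c = m) then 1 / of_nat n * (1 / of_nat n) else (0::complex)))"
        by (intro sum.cong refl if_cong) auto
      then show ?thesis by (simp only: dd2)
    qed
    show ?thesis unfolding sum.distrib sum_subtractf h1 h2 h3 h4 ..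
  qed
  also have "\<dots> = (if d = m \<and> c = r then 1 else 0) - (if d = r \<and> c = m then 1 / of_nat n else 0)"
    using n by auto
  finally show ?thesis .
qed

lemma words_upd: "w \<in> words n l \<Longrightarrow> c \<in> {1..n} \<Longrightarrow> w[q:=c] \<in> words n l"
  unfolding words_def using set_update_subset_insert[of w q c] by auto

lemma words_nth: "w \<in> words n l \<Longrightarrow> q < l \<Longrightarrow> w ! q \<in> {1..n}"
  unfolding words_def by (auto dest!: nth_mem[of q w])

lemma dd_gen: "x\<in>{1..(n::nat)} \<Longrightarrow> y\<in>{1..n} \<Longrightarrow>
  (\<Sum>a=1..n. \<Sum>b=1..n. if a = x \<and> b = y then F a b else 0) = (F x y :: 'a::comm_monoid_add)"
proof -
  assume a: "x\<in>{1..(n::nat)}" "y\<in>{1..n}"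
  have "(\<Sum>a=1..n. \<Sum>b=1..n. if a = x \<and> b = y then F a b else 0) = (\<Sum>a=1..n. if a = x then (\<Sum>b=1..n. if b = y then F a b else 0) else 0)"
    by (intro sum.cong refl) simp
  also have "\<dots> = F x y" using a by (simp only: sum.delta finite_atLeastAtMost if_True)
  finally show ?thesis .
qed

lemma swap4: "(\<Sum>a\<in>A. \<Sum>b\<in>A. \<Sum>c\<in>A. \<Sum>d\<in>A. G a b c d) = (\<Sum>c\<in>A. \<Sum>d\<in>A. \<Sum>a\<in>A. \<Sum>b\<in>A. G a b c d)"
proof -
  have "(\<Sum>a\<in>A. \<Sum>b\<in>A. \<Sum>c\<in>A. \<Sum>d\<in>A. G a b c d) = (\<Sum>a\<in>A. \<Sum>c\<in>A. \<Sum>b\<in>A. \<Sum>d\<in>A. G a b c d)"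
    by (rule sum.cong[OF refl], rule sum.swap)
  also have "\<dots> = (\<Sum>a\<in>A. \<Sum>c\<in>A. \<Sum>d\<in>A. \<Sum>b\<in>A. G a b c d)"
    by (rule sum.cong[OF refl], rule sum.cong[OF refl], rule sum.swap)
  also have "\<dots> = (\<Sum>c\<in>A. \<Sum>a\<in>A. \<Sum>d\<in>A. \<Sum>b\<in>A. G a b c d)"
    by (rule sum.swap)
  also have "\<dots> = (\<Sum>c\<in>A. \<Sum>d\<in>A. \<Sum>a\<in>A. \<Sum>b\<in>A. G a b c d)"
    by (rule sum.cong[OF refl], rule sum.swap)
  finally show ?thesis .
qed

lemma Ebar_E: "a \<noteq> b \<Longrightarrow> Ebar n a b = E a b"
  by (simp add: Ebar_def fun_eq_iff)

lemma Ebar_sl: assumes "a \<in> {1..n}" "b \<in> {1..n}" shows "Ebar n a b \<in> sl n"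
proof -
  have "mat_on n (Ebar n a b)"
    unfolding mat_on_def
  proof (intro allI impI)
    fix i j assume h: "Ebar n a b i j \<noteq> 0"
    show "i \<in> {1..n} \<and> j \<in> {1..n}"
    proof (cases "i = a \<and> j = b")
      case True then show ?thesis using assms by simp
    next
      case False
      then have "E a b i j = 0" by (auto simp: E_def)
      then have "Id_n n i j \<noteq> 0" using h unfolding Ebar_def by (cases "a = b"; simp)
      then show ?thesis unfolding Id_n_def by (cases "i = j"; simp split: if_splits)
    qed
  qed
  moreover have "(\<Sum>i=1..n. Ebar n a b i i) = 0"
  proof -
    have "(\<Sum>i=1..n. Ebar n a b i i) = (\<Sum>i=1..n. (if a = i \<and> b = i then 1 else 0) - (if b = a then 1 / of_nat n else 0))"
      by (intro sum.cong refl) (simp add: Ebar_val)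
    also have "\<dots> = 0"
    proof (cases "a = b")
      case True
      have "(\<Sum>i=1..n. (if a = i \<and> b = i then 1 else 0) - (if b = a then 1 / of_nat n else 0))
         = (\<Sum>i=1..n. (if a = i then 1 else 0)) - (\<Sum>i=1..n. 1 / (of_nat n::complex))"
        unfolding sum_subtractf using True by simp
      also have "\<dots> = 0" using assms by (simp add: sum.delta)
      finally show ?thesis .
    next
      case False
      have "(\<Sum>i=1..n. (if a = i \<and> b = i then 1 else 0) - (if b = a then 1 / of_nat n else 0)) = (\<Sum>i=1..n. (0::complex))"
        using False by (intro sum.cong refl) auto
      then show ?thesis by simp
    qed
    finally show ?thesis .
  qed
  ultimately show ?thesis by (simp add: sl_def)
qed

lemma E_sl: "a \<in> {1..n} \<Longrightarrow> b \<in> {1..n} \<Longrightarrow> a \<noteq> b \<Longrightarrow> E a b \<in> sl n"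
  using Ebar_sl Ebar_E by metis

lemma std_word_split:
  assumes "k \<le> n"
  shows "std_word n ls = concat (map (\<lambda>m. replicate (ls m) m) [1..<k+1]) @ concat (map (\<lambda>m. replicate (ls m) m) [k+1..<n+1])"
proof -
  have "[1..<n+1] = [1..<k+1] @ [k+1..<n+1]"
    using upt_add_eq_append[of 1 "k+1" "n - k"] assms by simp
  then show ?thesis unfolding std_word_def by simp
qed

lemma len_part: "length (concat (map (\<lambda>m. replicate (ls m) m) [1..<k+1])) = (\<Sum>j=1..k. ls j)"
proof -
  have "length (concat (map (\<lambda>m. replicate (ls m) m) [1..<k+1])) = sum_list (map ls [1..<k+1])"
    by (simp add: length_concat comp_def)
  also have "\<dots> = sum ls {1..<k+1}" by (simp add: sum_set_upt_conv_sum_list_nat[symmetric])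
  also have "{1..<k+1} = {1..k}" by auto
  finally show ?thesis .
qed

lemma set_part: "set (concat (map (\<lambda>m. replicate (ls m) m) [a..<b])) \<subseteq> {a..<b}"
  by auto

lemma std_word_words: "(\<Sum>k=1..n. ls k) = l \<Longrightarrow> std_word n ls \<in> words n l"
proof -
  assume h: "(\<Sum>k=1..n. ls k) = l"
  have "length (std_word n ls) = l" using len_part[of ls n] h by (simp add: std_word_def)
  moreover have "set (std_word n ls) \<subseteq> {1..n}" unfolding std_word_def using set_part[of ls 1 "n+1"] by auto
  ultimately show ?thesis by (simp add: words_def)
qed

lemma std_word_le:
  assumes "k \<le> n" "q < length (std_word n ls)"
  shows "(std_word n ls ! q \<le> k) = (q < (\<Sum>j=1..k. ls j))"
proof -
  let ?A = "concat (map (\<lambda>m. replicate (ls m) m) [1..<k+1])"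
  let ?B = "concat (map (\<lambda>m. replicate (ls m) m) [k+1..<n+1])"
  have w: "std_word n ls = ?A @ ?B" using std_word_split[OF assms(1)] .
  have lA: "length ?A = (\<Sum>j=1..k. ls j)" by (rule len_part)
  show ?thesis
  proof (cases "q < length ?A")
    case True
    then have "std_word n ls ! q = ?A ! q" unfolding w by (simp add: nth_append)
    moreover have "?A ! q \<in> set ?A" using True by (rule nth_mem)
    ultimately have "std_word n ls ! q \<le> k" using set_part[of ls 1 "k+1"] by auto
    then show ?thesis using True lA by simp
  next
    case False
    then have "std_word n ls ! q = ?B ! (q - length ?A)" unfolding w by (simp add: nth_append)
    moreover have "?B ! (q - length ?A) \<in> set ?B" using False assms(2) unfolding w by (intro nth_mem) simp
    ultimately have "std_word n ls ! q > k" using set_part[of ls "k+1" "n+1"] by auto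
    then show ?thesis using False lA by simp
  qed
qed
lemma split3: "(m::nat) \<in> {1..n} \<Longrightarrow> sum f {1..n} = sum f {1..<m} + f m + sum f {m<..n}"
proof -
  assume m: "m \<in> {1..n}"
  have e: "{1..n} = {1..<m} \<union> insert m {m<..n}" using m by auto
  have "sum f {1..n} = sum f {1..<m} + sum f (insert m {m<..n})"
    unfolding e by (rule sum.union_disjoint) auto
  also have "sum f (insert m {m<..n}) = f m + sum f {m<..n}" by simp
  finally show ?thesis by (simp add: add.assoc)
qed

lemma scalar_id:
  assumes "s < i" "1 \<le> m"
  shows "\<mu> + of_nat (i - 1 - s) + (of_nat n - 1) / 2 - (\<mu> + rho n m + of_nat i - of_nat s - 1) = (of_nat (m - 1) :: complex)"
proof -
  have a: "of_nat (i - 1 - s) = (of_nat i - 1 - of_nat s :: complex)" using assms by (simp add: of_nat_diff)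
  have b: "of_nat (m - 1) = (of_nat m - 1 :: complex)" using assms by (simp add: of_nat_diff)
  have c: "rho n m = (of_nat n - 2 * of_nat m + 1) / 2" by (simp add: rho_def)
  show ?thesis unfolding a b c by (simp add: field_simps)
qed

lemma grp: "X + Y + Zc - Ze = (Mm::'a::ab_group_add) \<Longrightarrow> X + A + (Ts + Y) + Zc - Ze = A + Mm + Ts"
proof -
  assume h: "X + Y + Zc - Ze = Mm"
  have "X + A + (Ts + Y) + Zc - Ze = A + (X + Y + Zc - Ze) + Ts" by (simp add: algebra_simps)
  then show ?thesis using h by simp
qed

locale ctx =
  fixes n l :: nat and scale :: "complex \<Rightarrow> 'x::ab_group_add \<Rightarrow> 'x" and act :: "mat \<Rightarrow> 'x \<Rightarrow> 'x"
  assumes rep: "sl_rep n scale act" and n1: "n \<ge> 1"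
begin

lemma vs: "vector_space scale" using rep by (simp add: sl_rep_def)

sublocale M: module scale using vs by (simp add: module_iff_vector_space)

lemma act_add: "x \<in> sl n \<Longrightarrow> act x (a + b) = act x a + act x b"
  using rep by (simp add: sl_rep_def)
lemma act_scale: "x \<in> sl n \<Longrightarrow> act x (scale c a) = scale c (act x a)"
  using rep by (simp add: sl_rep_def)
lemma act_zero: "x \<in> sl n \<Longrightarrow> act x 0 = 0"
  using act_scale[of x 0 0] by simp
lemma act_sum: "x \<in> sl n \<Longrightarrow> act x (\<Sum>a\<in>A. f a) = (\<Sum>a\<in>A. act x (f a))"
  by (induct A rule: infinite_finite_induct) (auto simp: act_zero act_add)

lemma fac0_sng: "x \<in> sl n \<Longrightarrow> w \<in> words n l \<Longrightarrow> fac0 n l act x (sng w y) = sng w (act x y)"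
  unfolding fac0_def sng_def by (rule ext) (simp add: act_zero)

lemma fac0_sum: "x \<in> sl n \<Longrightarrow> fac0 n l act x (\<Sum>a\<in>A. F a) = (\<Sum>a\<in>A. fac0 n l act x (F a))"
  unfolding fac0_def by (rule ext) (simp add: sum_fun_apply act_sum)

lemma facV_sum: "facV n l scale j x (\<Sum>a\<in>A. F a) = (\<Sum>a\<in>A. facV n l scale j x (F a))"
  unfolding facV_def by (rule ext) (simp add: sum_fun_apply M.scale_sum_right sum.swap[of _ A])

lemma facV_sng:
  assumes w: "w \<in> words n l" and j: "j \<in> {1..l}"
  shows "facV n l scale j x (sng w y) = (\<Sum>c=1..n. sng (w[j-1:=c]) (scale (x c (w!(j-1))) y))"
proof (rule ext)
  fix w'
  define q where "q = j - 1"
  have ql: "q < l" using j by (auto simp: q_def)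
  have lw: "length w = l" using w by (simp add: words_def)
  have wq: "w ! q \<in> {1..n}" using words_nth[OF w ql] .
  show "facV n l scale j x (sng w y) w' = (\<Sum>c=1..n. sng (w[j-1:=c]) (scale (x c (w!(j-1))) y)) w'"
  proof (cases "w' \<in> words n l")
    case False
    have "\<And>c. c \<in> {1..n} \<Longrightarrow> w' \<noteq> w[q:=c]" using False words_upd[OF w] by blast
    then show ?thesis using False unfolding facV_def sng_def sum_fun_apply q_def[symmetric]
      by simp
  next
    case True
    have lw': "length w' = l" using True by (simp add: words_def)
    define c0 where "c0 = w' ! q"
    have c0: "c0 \<in> {1..n}" using words_nth[OF True ql] by (simp add: c0_def)
    show ?thesis
    proof (cases "w' = w[q:=c0]")
      case eq: True
      have L: "(\<Sum>b=1..n. scale (x c0 b) (if w'[q:=b] = w then y else 0)) = scale (x c0 (w!q)) y"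
      proof -
        have "(\<Sum>b=1..n. scale (x c0 b) (if w'[q:=b] = w then y else 0))
            = (\<Sum>b=1..n. if b = w!q then scale (x c0 b) y else 0)"
        proof (intro sum.cong refl)
          fix b
          have "(w'[q:=b] = w) = (b = w!q)"
            using eq ql lw by (metis list_update_id list_update_overwrite nth_list_update_eq)
          then show "scale (x c0 b) (if w'[q:=b] = w then y else 0) = (if b = w!q then scale (x c0 b) y else 0)"
            by simp
        qed
        then show ?thesis using wq by (simp add: sum.delta')
      qed
      have R: "(\<Sum>c=1..n. if w' = w[q:=c] then scale (x c (w!q)) y else 0) = scale (x c0 (w!q)) y"
      proof -
        have "(\<Sum>c=1..n. if w' = w[q:=c] then scale (x c (w!q)) y else 0)
            = (\<Sum>c=1..n. if c = c0 then scale (x c (w!q)) y else 0)"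
        proof (intro sum.cong refl)
          fix c
          have "(w' = w[q:=c]) = (c = c0)"
            using eq ql lw by (metis c0_def nth_list_update_eq)
          then show "(if w' = w[q:=c] then scale (x c (w!q)) y else 0) = (if c = c0 then scale (x c (w!q)) y else 0)"
            by simp
        qed
        then show ?thesis using c0 by (simp add: sum.delta')
      qed
      show ?thesis unfolding facV_def sng_def sum_fun_apply q_def[symmetric]
        using True L R c0_def by simp
    next
      case neq: False
      have L: "\<And>b. w'[q:=b] \<noteq> w"
        using neq by (metis c0_def list_update_id list_update_overwrite)
      have R: "\<And>c. w' \<noteq> w[q:=c]"
        using neq ql lw by (metis c0_def nth_list_update_eq)
      show ?thesis unfolding facV_def sng_def sum_fun_apply q_def[symmetric]
        using True L R by simp
    qed
  qed
qed


lemma scale_if1: "scale (if P then 1 else 0) y = (if P then y else 0)" by simp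
lemma scale_if2: "scale (if P then c else 0) y = (if P then scale c y else 0)" by simp
lemma sng_if: "sng X (if P then a else 0) = (if P then sng X a else 0)" by simp

lemma Omega0_sng:
  assumes w: "w \<in> words n l" and i: "i \<in> {1..l}"
  shows "Omega0 n l scale act i (sng w y) =
    (\<Sum>c=1..n. sng (w[i-1:=c]) (act (Ebar n (w!(i-1)) c) y))
    - sng w (scale (1 / of_nat n) (\<Sum>a=1..n. act (Ebar n a a) y))"
proof -
  define p where "p = i - 1"
  define m where "m = w ! p"
  have pl: "p < l" using i by (auto simp: p_def)
  have m: "m \<in> {1..n}" using words_nth[OF w pl] by (simp add: m_def)
  have "Omega0 n l scale act i (sng w y) =
     (\<Sum>a=1..n. \<Sum>b=1..n. \<Sum>c=1..n. sng (w[p:=c]) (scale (Ebar n b a c m) (act (Ebar n a b) y)))"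
    unfolding Omega0_def
  proof (intro sum.cong refl)
    fix a b assume a: "a \<in> {1..n}" and b: "b \<in> {1..n}"
    show "fac0 n l act (Ebar n a b) (facV n l scale i (Ebar n b a) (sng w y)) =
      (\<Sum>c=1..n. sng (w[p:=c]) (scale (Ebar n b a c m) (act (Ebar n a b) y)))"
      unfolding facV_sng[OF w i] fac0_sum[OF Ebar_sl[OF a b]] p_def[symmetric] m_def[symmetric]
      by (intro sum.cong refl) (simp add: fac0_sng[OF Ebar_sl[OF a b] words_upd[OF w]] act_scale[OF Ebar_sl[OF a b]])
  qed
  also have "\<dots> = (\<Sum>a=1..n. \<Sum>b=1..n. \<Sum>c=1..n.
       sng (w[p:=c]) (if a = m \<and> b = c then act (Ebar n a b) y else 0)
     - sng (w[p:=c]) (if a = b \<and> c = m then scale (1 / of_nat n) (act (Ebar n a b) y) else 0))"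
  proof (intro sum.cong refl)
    fix a b c assume c: "c \<in> {1..n}"
    show "sng (w[p:=c]) (scale (Ebar n b a c m) (act (Ebar n a b) y)) =
       sng (w[p:=c]) (if a = m \<and> b = c then act (Ebar n a b) y else 0)
     - sng (w[p:=c]) (if a = b \<and> c = m then scale (1 / of_nat n) (act (Ebar n a b) y) else 0)"
      unfolding Ebar_val[OF c] M.scale_left_diff_distrib sng_diff
      by (intro arg_cong2[where f="(-)"]; cases "a = m \<and> b = c"; cases "a = b \<and> c = m"; auto)
  qed
  also have "\<dots> = (\<Sum>a=1..n. \<Sum>b=1..n. \<Sum>c=1..n. if a = m \<and> b = c then sng (w[p:=c]) (act (Ebar n a b) y) else 0)
     - (\<Sum>a=1..n. \<Sum>b=1..n. \<Sum>c=1..n. if b = a \<and> c = m then sng (w[p:=c]) (scale (1 / of_nat n) (act (Ebar n a b) y)) else 0)"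
    unfolding sum_subtractf
    by (intro arg_cong2[where f="(-)"] sum.cong refl) auto
  also have "(\<Sum>a=1..n. \<Sum>b=1..n. \<Sum>c=1..n. if a = m \<and> b = c then sng (w[p:=c]) (act (Ebar n a b) y) else 0)
     = (\<Sum>c=1..n. sng (w[p:=c]) (act (Ebar n m c) y))"
  proof -
    have "(\<Sum>a=1..n. \<Sum>b=1..n. \<Sum>c=1..n. if a = m \<and> b = c then sng (w[p:=c]) (act (Ebar n a b) y) else 0)
       = (\<Sum>a=1..n. if a = m then (\<Sum>b=1..n. sng (w[p:=b]) (act (Ebar n a b) y)) else 0)"
      by (intro sum.cong refl) (simp add: sum.delta)
    also have "\<dots> = (\<Sum>c=1..n. sng (w[p:=c]) (act (Ebar n m c) y))"
      using m by (simp only: sum.delta finite_atLeastAtMost if_True)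
    finally show ?thesis .
  qed
  also have "(\<Sum>a=1..n. \<Sum>b=1..n. \<Sum>c=1..n. if b = a \<and> c = m then sng (w[p:=c]) (scale (1 / of_nat n) (act (Ebar n a b) y)) else 0)
     = sng w (scale (1 / of_nat n) (\<Sum>a=1..n. act (Ebar n a a) y))"
  proof -
    have "(\<Sum>a=1..n. \<Sum>b=1..n. \<Sum>c=1..n. if b = a \<and> c = m then sng (w[p:=c]) (scale (1 / of_nat n) (act (Ebar n a b) y)) else 0)
      = (\<Sum>a=1..n. sng (w[p:=m]) (scale (1 / of_nat n) (act (Ebar n a a) y)))"
    proof (intro sum.cong refl)
      fix a assume a: "a \<in> {1..n}"
      show "(\<Sum>b=1..n. \<Sum>c=1..n. if b = a \<and> c = m then sng (w[p:=c]) (scale (1 / of_nat n) (act (Ebar n a b) y)) else 0)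
         = sng (w[p:=m]) (scale (1 / of_nat n) (act (Ebar n a a) y))"
        using dd_gen[OF a m, of "\<lambda>b c. sng (w[p:=c]) (scale (1 / of_nat n) (act (Ebar n a b) y))"] by simp
    qed
    also have "\<dots> = sng w (scale (1 / of_nat n) (\<Sum>a=1..n. act (Ebar n a a) y))"
      by (simp add: m_def sng_sum M.scale_sum_right)
    finally show ?thesis .
  qed
  finally show ?thesis by (simp only: p_def m_def)
qed

lemma OmegaV_sng:
  assumes w: "w \<in> words n l" and i: "i \<in> {1..l}" and j: "j \<in> {1..l}" and ji: "j \<noteq> i"
  shows "OmegaV n l scale j i (sng w y) =
    sng (w[i-1:=w!(j-1), j-1:=w!(i-1)]) y - sng w (scale (1 / of_nat n) y)"
proof -
  define p where "p = i - 1"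
  define m where "m = w ! p"
  define q where "q = j - 1"
  define r where "r = w ! q"
  have pl: "p < l" using i by (auto simp: p_def)
  have ql: "q < l" using j by (auto simp: q_def)
  have pq: "p \<noteq> q" using i j ji by (auto simp: p_def q_def)
  have lw: "length w = l" using w by (simp add: words_def)
  have m: "m \<in> {1..n}" using words_nth[OF w pl] by (simp add: m_def)
  have r: "r \<in> {1..n}" using words_nth[OF w ql] by (simp add: r_def)
  let ?G = "\<lambda>a b c d. sng (w[p:=c, q:=d]) (scale (Ebar n a b d r * Ebar n b a c m) y)"
  have "OmegaV n l scale j i (sng w y) = (\<Sum>a=1..n. \<Sum>b=1..n. \<Sum>c=1..n. \<Sum>d=1..n. ?G a b c d)"
    unfolding OmegaV_def
  proof (intro sum.cong refl)
    fix a b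
    show "facV n l scale j (Ebar n a b) (facV n l scale i (Ebar n b a) (sng w y)) = (\<Sum>c=1..n. \<Sum>d=1..n. ?G a b c d)"
      unfolding facV_sng[OF w i] facV_sum p_def[symmetric] m_def[symmetric]
    proof (intro sum.cong refl)
      fix c assume c: "c \<in> {1..n}"
      have "w[p:=c] ! q = r" using pq by (simp add: r_def)
      then show "facV n l scale j (Ebar n a b) (sng (w[p:=c]) (scale (Ebar n b a c m) y)) = (\<Sum>d=1..n. ?G a b c d)"
        unfolding facV_sng[OF words_upd[OF w c] j] q_def[symmetric] by simp
    qed
  qed
  also have "\<dots> = (\<Sum>c=1..n. \<Sum>d=1..n. \<Sum>a=1..n. \<Sum>b=1..n. ?G a b c d)"
    by (rule swap4)
  also have "\<dots> = (\<Sum>c=1..n. \<Sum>d=1..n. sng (w[p:=c, q:=d]) (scale ((if d = m \<and> c = r then 1 else 0) - (if d = r \<and> c = m then 1 / of_nat n else 0)) y))"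
  proof (intro sum.cong refl)
    fix c d assume c: "c \<in> {1..n}" and d: "d \<in> {1..n}"
    show "(\<Sum>a=1..n. \<Sum>b=1..n. ?G a b c d) = sng (w[p:=c, q:=d]) (scale ((if d = m \<and> c = r then 1 else 0) - (if d = r \<and> c = m then 1 / of_nat n else 0)) y)"
      unfolding CI[OF c d r m, symmetric] M.scale_sum_left sng_sum ..
  qed
  also have "\<dots> = (\<Sum>c=1..n. \<Sum>d=1..n. if c = r \<and> d = m then sng (w[p:=c, q:=d]) y else 0)
     - (\<Sum>c=1..n. \<Sum>d=1..n. if c = m \<and> d = r then sng (w[p:=c, q:=d]) (scale (1 / of_nat n) y) else 0)"
    unfolding sum_subtractf[symmetric]
  proof (intro sum.cong refl)
    fix c d
    show "sng (w[p:=c, q:=d]) (scale ((if d = m \<and> c = r then 1 else 0) - (if d = r \<and> c = m then 1 / of_nat n else 0)) y)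
      = (if c = r \<and> d = m then sng (w[p:=c, q:=d]) y else 0) - (if c = m \<and> d = r then sng (w[p:=c, q:=d]) (scale (1 / of_nat n) y) else 0)"
      unfolding M.scale_left_diff_distrib sng_diff
      by (simp only: scale_if1 scale_if2 sng_if conj_commute M.scale_one)
  qed
  also have "\<dots> = sng (w[p:=r, q:=m]) y - sng (w[p:=m, q:=r]) (scale (1 / of_nat n) y)"
    using dd_gen[OF r m, of "\<lambda>c d. sng (w[p:=c, q:=d]) y"]
      dd_gen[OF m r, of "\<lambda>c d. sng (w[p:=c, q:=d]) (scale (1 / of_nat n) y)"] by simp
  also have "w[p:=m, q:=r] = w" by (simp add: m_def r_def)
  finally show ?thesis by (simp only: p_def q_def m_def r_def)
qed

lemma actT_sng:
  assumes w: "w \<in> words n l" and b: "b \<in> {1..n}" and m: "m \<in> {1..n}" and bm: "b \<noteq> m"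
  shows "actT n l scale act (E m b) (sng w y) =
     sng w (act (E m b) y) + (\<Sum>j=1..l. if w!(j-1) = b then sng (w[j-1:=m]) y else 0)"
proof -
  have sl: "E m b \<in> sl n" using E_sl m b bm by metis
  have "(\<Sum>j=1..l. facV n l scale j (E m b) (sng w y)) = (\<Sum>j=1..l. if w!(j-1) = b then sng (w[j-1:=m]) y else 0)"
  proof (intro sum.cong refl)
    fix j assume j: "j \<in> {1..l}"
    have "(\<Sum>c=1..n. sng (w[j-1:=c]) (scale (E m b c (w!(j-1))) y)) = (\<Sum>c=1..n. if c = m \<and> w!(j-1) = b then sng (w[j-1:=c]) y else 0)"
      by (intro sum.cong refl) (simp add: E_def)
    also have "\<dots> = (if w!(j-1) = b then sng (w[j-1:=m]) y else 0)"
      using m by (cases "w!(j-1) = b") (simp_all add: sum.delta')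
    finally show "facV n l scale j (E m b) (sng w y) = (if w!(j-1) = b then sng (w[j-1:=m]) y else 0)"
      unfolding facV_sng[OF w j] .
  qed
  then show ?thesis unfolding actT_def fac0_sng[OF sl w] by simp
qed


lemma scaleT_sng: "scaleT scale c (sng w y) = sng w (scale c y)"
  by (simp add: scaleT_def sng_def fun_eq_iff)

sublocale T: module "scaleT scale"
  by unfold_locales (simp_all add: scaleT_def fun_eq_iff M.scale_right_distrib M.scale_left_distrib)

end

locale ctx2 = ctx n l scale act
  for n l :: nat and scale :: "complex \<Rightarrow> 'x::ab_group_add \<Rightarrow> 'x" and act :: "mat \<Rightarrow> 'x \<Rightarrow> 'x" +
  fixes v :: 'x and \<mu> :: "nat \<Rightarrow> complex"
  assumes up: "\<And>a b. a \<in> {1..n} \<Longrightarrow> b \<in> {1..n} \<Longrightarrow> a < b \<Longrightarrow> act (E a b) v = 0"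
    and dg: "\<And>d. diag d \<in> sl n \<Longrightarrow> act (diag d) v = scale (\<Sum>k=1..n. d k * \<mu> k) v"
    and wt: "(\<Sum>k=1..n. \<mu> k) = 0"
begin

lemma Ebar_diag_v: assumes a: "a \<in> {1..n}" shows "act (Ebar n a a) v = scale (\<mu> a) v"
proof -
  define d where "d = (\<lambda>k. (if k = a then 1 else 0) - (if k \<in> {1..n} then 1 / of_nat n else (0::complex)))"
  have e: "Ebar n a a = diag d"
  proof (intro ext)
    fix i j show "Ebar n a a i j = diag d i j"
      unfolding Ebar_def E_def Id_n_def diag_def d_def by (cases "i = j"; cases "i = a"; simp)
  qed
  have "(\<Sum>k=1..n. d k * \<mu> k) = (\<Sum>k=1..n. (if k = a then \<mu> k else 0) - (1 / of_nat n) * \<mu> k)"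
    by (intro sum.cong refl) (simp add: d_def algebra_simps)
  also have "\<dots> = \<mu> a" using a wt by (simp add: sum_subtractf sum_divide_distrib[symmetric])
  finally show ?thesis using dg[of d] e Ebar_sl[OF a a] by simp
qed

lemma sum_Ebar_diag_v: "(\<Sum>a=1..n. act (Ebar n a a) v) = 0"
proof -
  have "(\<Sum>a=1..n. act (Ebar n a a) v) = (\<Sum>a=1..n. scale (\<mu> a) v)"
    by (intro sum.cong refl) (simp add: Ebar_diag_v)
  also have "\<dots> = scale (\<Sum>a=1..n. \<mu> a) v" by (simp add: M.scale_sum_left)
  finally show ?thesis using wt by simp
qed


lemma main_eq:
  assumes ls: "(\<Sum>k=1..n. ls k) = l" and i: "i \<in> {1..l}" and m: "m \<in> {1..n}"
    and lo: "(\<Sum>k=1..<m. ls k) < i" and hi: "i \<le> (\<Sum>k=1..m. ls k)"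
  shows "yop n l scale act i (sng (std_word n ls) v)
     - scaleT scale (\<mu> m + rho n m + of_nat i - of_nat (\<Sum>k=1..<m. ls k) - 1) (sng (std_word n ls) v)
     = (\<Sum>b\<in>{1..<m}. actT n l scale act (E m b) (sng ((std_word n ls)[i-1:=b]) v))"
proof -
  define w where "w = std_word n ls"
  define s where "s = (\<Sum>k=1..<m. ls k)"
  define p where "p = i - 1"
  have W: "w \<in> words n l" using std_word_words[OF ls] by (simp add: w_def)
  have lw: "length w = l" using W by (simp add: words_def)
  have pl: "p < l" using i by (auto simp: p_def)
  have si: "s < i" using lo by (simp add: s_def)
  have sl: "s \<le> l" using si i by simp
  have m1: "1 \<le> m" using m by simp
  have sm1: "(\<Sum>k=1..m-1. ls k) = s"
  proof -
    have "{1..m-1} = {1..<m}" using m1 by auto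
    then show ?thesis by (simp add: s_def)
  qed
  have lt_iff: "(w!q < m) = (q < s)" if q: "q < l" for q
  proof -
    have mn: "m - 1 \<le> n" using m by (metis atLeastAtMost_iff diff_le_self le_trans)
    have "q < length (std_word n ls)" using q lw by (simp add: w_def)
    from std_word_le[OF mn this] have "(w!q \<le> m - 1) = (q < s)" using sm1 by (simp add: w_def)
    then show ?thesis using m1 by linarith
  qed
  have le_iff: "(w!q \<le> m) = (q < (\<Sum>k=1..m. ls k))" if q: "q < l" for q
    using std_word_le[of m n q ls] m q lw by (simp add: w_def)
  have wp: "w!p = m"
  proof -
    have i1: "1 \<le> i" using i by simp
    have h1: "p < (\<Sum>k=1..m. ls k)" using hi i1 unfolding p_def by linarith
    have h2: "\<not> p < s" using si unfolding p_def by linarith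
    have "w!p \<le> m" using le_iff[OF pl] h1 by simp
    moreover have "\<not> w!p < m" using lt_iff[OF pl] h2 by simp
    ultimately show ?thesis by simp
  qed
  have ge1: "1 \<le> w!q" if "q < l" for q using words_nth[OF W that] by simp
  define T where "T j = sng (w[p:=w!(j-1), j-1:=m]) v" for j
  have wpm: "w[p:=m] = w" using wp by (metis list_update_id)

  have P1: "Omega0 n l scale act i (sng w v) = sng w (scale (\<mu> m) v) + (\<Sum>c\<in>{1..<m}. sng (w[p:=c]) (act (E m c) v))"
  proof -
    have "Omega0 n l scale act i (sng w v) = (\<Sum>c=1..n. sng (w[p:=c]) (act (Ebar n m c) v))"
      using Omega0_sng[OF W i, of v] sum_Ebar_diag_v wp by (simp add: p_def)
    also have "\<dots> = (\<Sum>c\<in>{1..<m}. sng (w[p:=c]) (act (Ebar n m c) v)) + sng (w[p:=m]) (act (Ebar n m m) v)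
       + (\<Sum>c\<in>{m<..n}. sng (w[p:=c]) (act (Ebar n m c) v))"
      by (rule split3[OF m])
    also have "(\<Sum>c\<in>{m<..n}. sng (w[p:=c]) (act (Ebar n m c) v)) = 0"
    proof (intro sum.neutral ballI)
      fix c assume c: "c \<in> {m<..n}"
      then have "act (Ebar n m c) v = 0" using up[of m c] m Ebar_E[of m c n] by auto
      then show "sng (w[p:=c]) (act (Ebar n m c) v) = 0" by simp
    qed
    also have "sng (w[p:=m]) (act (Ebar n m m) v) = sng w (scale (\<mu> m) v)"
      using Ebar_diag_v[OF m] wpm by simp
    also have "(\<Sum>c\<in>{1..<m}. sng (w[p:=c]) (act (Ebar n m c) v)) = (\<Sum>c\<in>{1..<m}. sng (w[p:=c]) (act (E m c) v))"
      by (intro sum.cong refl) (simp add: Ebar_E)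
    finally show ?thesis by (simp only: add_0_right add_0_left add.commute)
  qed

  have P2: "(\<Sum>j\<in>{1..<i}. OmegaV n l scale j i (sng w v) + scaleT scale (1 / of_nat n) (sng w v))
     = (\<Sum>j\<in>{1..s}. T j) + sng w (scale (of_nat (i - 1 - s)) v)"
  proof -
    have "(\<Sum>j\<in>{1..<i}. OmegaV n l scale j i (sng w v) + scaleT scale (1 / of_nat n) (sng w v)) = (\<Sum>j\<in>{1..<i}. T j)"
    proof (intro sum.cong refl)
      fix j assume j: "j \<in> {1..<i}"
      have j': "j \<in> {1..l}" "j \<noteq> i" using j i by auto
      show "OmegaV n l scale j i (sng w v) + scaleT scale (1 / of_nat n) (sng w v) = T j"
        unfolding OmegaV_sng[OF W i j'] scaleT_sng T_def using wp by (simp add: p_def)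
    qed
    also have "sum T {1..<i} = sum T {1..s} + sum T {s+1..<i}"
    proof -
      have "{1..<i} = {1..s} \<union> {s+1..<i}" using si by auto
      then show ?thesis by (simp only:) (rule sum.union_disjoint, auto)
    qed
    also have "sum T {s+1..<i} = (\<Sum>j\<in>{s+1..<i}. sng w v)"
    proof (intro sum.cong refl)
      fix j assume j: "j \<in> {s+1..<i}"
      define q where "q = j - 1"
      have ql: "q < l" "s \<le> q" "q < p" using j i by (auto simp: q_def p_def)
      have i1: "1 \<le> i" using i by simp
      have "q < (\<Sum>k=1..m. ls k)" using ql hi i1 unfolding p_def by linarith
      then have "w!q \<le> m" using le_iff[OF ql(1)] by simp
      moreover have "\<not> w!q < m" using lt_iff[OF ql(1)] ql by simp
      ultimately have wq: "w!q = m" by simp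
      show "T j = sng w v" unfolding T_def q_def[symmetric] using wq wpm by (metis list_update_id)
    qed
    also have "\<dots> = sng w (scale (of_nat (i - 1 - s)) v)"
      by (simp add: sng_sum[symmetric] M.sum_constant_scale)
    finally show ?thesis .
  qed

  have P3: "(\<Sum>b\<in>{1..<m}. actT n l scale act (E m b) (sng (w[p:=b]) v))
     = (\<Sum>c\<in>{1..<m}. sng (w[p:=c]) (act (E m c) v)) + sng w (scale (of_nat (m - 1)) v) + (\<Sum>j\<in>{1..s}. T j)"
  proof -
    have "(\<Sum>b\<in>{1..<m}. actT n l scale act (E m b) (sng (w[p:=b]) v))
      = (\<Sum>b\<in>{1..<m}. sng (w[p:=b]) (act (E m b) v) + sng w v
          + (\<Sum>j\<in>{1..l}-{i}. if w!(j-1) = b then sng (w[p:=b, j-1:=m]) v else 0))"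
    proof (intro sum.cong refl)
      fix b assume b: "b \<in> {1..<m}"
      have b': "b \<in> {1..n}" "b \<noteq> m" using b m by auto
      have Wb: "w[p:=b] \<in> words n l" using words_upd[OF W b'(1)] .
      have "(\<Sum>j=1..l. if w[p:=b]!(j-1) = b then sng (w[p:=b, j-1:=m]) v else 0)
         = (if w[p:=b]!(i-1) = b then sng (w[p:=b, i-1:=m]) v else 0)
           + (\<Sum>j\<in>{1..l}-{i}. if w[p:=b]!(j-1) = b then sng (w[p:=b, j-1:=m]) v else 0)"
        using i by (intro sum.remove) auto
      also have "(if w[p:=b]!(i-1) = b then sng (w[p:=b, i-1:=m]) v else 0) = sng w v"
        using pl lw wpm unfolding p_def[symmetric] by simp
      also have "(\<Sum>j\<in>{1..l}-{i}. if w[p:=b]!(j-1) = b then sng (w[p:=b, j-1:=m]) v else 0)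
         = (\<Sum>j\<in>{1..l}-{i}. if w!(j-1) = b then sng (w[p:=b, j-1:=m]) v else 0)"
      proof (intro sum.cong refl)
        fix j assume j: "j \<in> {1..l}-{i}"
        then have "j - 1 \<noteq> p" using i by (auto simp: p_def)
        then show "(if w[p:=b]!(j-1) = b then sng (w[p:=b, j-1:=m]) v else 0)
          = (if w!(j-1) = b then sng (w[p:=b, j-1:=m]) v else 0)" by simp
      qed
      finally show "actT n l scale act (E m b) (sng (w[p:=b]) v) = sng (w[p:=b]) (act (E m b) v) + sng w v
          + (\<Sum>j\<in>{1..l}-{i}. if w!(j-1) = b then sng (w[p:=b, j-1:=m]) v else 0)"
        unfolding actT_sng[OF Wb b'(1) m b'(2)] by (simp only: add.assoc)
    qed
    also have "\<dots> = (\<Sum>c\<in>{1..<m}. sng (w[p:=c]) (act (E m c) v)) + (\<Sum>b\<in>{1..<m}. sng w v)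
        + (\<Sum>b\<in>{1..<m}. \<Sum>j\<in>{1..l}-{i}. if w!(j-1) = b then sng (w[p:=b, j-1:=m]) v else 0)"
      by (simp only: sum.distrib)
    also have "(\<Sum>b\<in>{1..<m}. sng w v) = sng w (scale (of_nat (m - 1)) v)"
      by (simp add: sng_sum[symmetric] M.sum_constant_scale)
    also have "(\<Sum>b\<in>{1..<m}. \<Sum>j\<in>{1..l}-{i}. if w!(j-1) = b then sng (w[p:=b, j-1:=m]) v else 0)
        = (\<Sum>j\<in>{1..l}-{i}. \<Sum>b\<in>{1..<m}. if w!(j-1) = b then sng (w[p:=b, j-1:=m]) v else 0)"
      by (rule sum.swap)
    also have "\<dots> = (\<Sum>j\<in>{1..l}-{i}. if j \<in> {1..s} then T j else 0)"
    proof (intro sum.cong refl)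
      fix j assume j: "j \<in> {1..l}-{i}"
      have jl: "j - 1 < l" using j by auto
      have "(w!(j-1) \<in> {1..<m}) = (j \<in> {1..s})" using lt_iff[OF jl] ge1[OF jl] j by auto
      then show "(\<Sum>b\<in>{1..<m}. if w!(j-1) = b then sng (w[p:=b, j-1:=m]) v else 0) = (if j \<in> {1..s} then T j else 0)"
        by (simp add: sum.delta' T_def)
    qed
    also have "\<dots> = (\<Sum>j\<in>({1..l}-{i}) \<inter> {1..s}. T j)"
      by (simp add: sum.inter_restrict)
    also have "({1..l}-{i}) \<inter> {1..s} = {1..s}" using si sl by auto
    finally show ?thesis by (simp only: add.assoc add.commute add.left_commute)
  qed

  have Y: "yop n l scale act i (sng w v) = sng w (scale (\<mu> m) v) + (\<Sum>c\<in>{1..<m}. sng (w[p:=c]) (act (E m c) v))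
     + ((\<Sum>j\<in>{1..s}. T j) + sng w (scale (of_nat (i - 1 - s)) v)) + sng w (scale ((of_nat n - 1) / 2) v)"
    unfolding yop_def P1 P2 unfolding scaleT_sng ..
  have Z: "sng w (scale (\<mu> m) v) + sng w (scale (of_nat (i - 1 - s)) v) + sng w (scale ((of_nat n - 1) / 2) v)
     - sng w (scale (\<mu> m + rho n m + of_nat i - of_nat s - 1) v) = sng w (scale (of_nat (m - 1)) v)"
    unfolding sng_add[symmetric] sng_diff[symmetric] M.scale_left_distrib[symmetric] M.scale_left_diff_distrib[symmetric]
      scalar_id[OF si m1] ..
  have calc: "yop n l scale act i (sng w v) - scaleT scale (\<mu> m + rho n m + of_nat i - of_nat s - 1) (sng w v)
     = (\<Sum>b\<in>{1..<m}. actT n l scale act (E m b) (sng (w[p:=b]) v))"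
  proof -
    have "yop n l scale act i (sng w v) - scaleT scale (\<mu> m + rho n m + of_nat i - of_nat s - 1) (sng w v)
      = sng w (scale (\<mu> m) v) + (\<Sum>c\<in>{1..<m}. sng (w[p:=c]) (act (E m c) v))
       + ((\<Sum>j\<in>{1..s}. T j) + sng w (scale (of_nat (i - 1 - s)) v)) + sng w (scale ((of_nat n - 1) / 2) v)
       - sng w (scale (\<mu> m + rho n m + of_nat i - of_nat s - 1) v)"
      by (simp only: Y scaleT_sng)
    also have "\<dots> = (\<Sum>c\<in>{1..<m}. sng (w[p:=c]) (act (E m c) v)) + sng w (scale (of_nat (m - 1)) v) + (\<Sum>j\<in>{1..s}. T j)"
      by (rule grp[OF Z])
    also have "\<dots> = (\<Sum>b\<in>{1..<m}. actT n l scale act (E m b) (sng (w[p:=b]) v))"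
      by (rule P3[symmetric])
    finally show ?thesis .
  qed
  show ?thesis
    unfolding w_def[symmetric] s_def[symmetric] p_def[symmetric] by (rule calc)
qed

end

theorem mainTheorem4:
  fixes n l :: nat and ls :: "nat \<Rightarrow> nat"
    and lam \<mu> :: "nat \<Rightarrow> complex"
    and scale :: "complex \<Rightarrow> 'x::ab_group_add \<Rightarrow> 'x"
    and act :: "mat \<Rightarrow> 'x \<Rightarrow> 'x" and v :: 'x
  assumes "n \<ge> 2" and "l \<ge> 1"
    and "integral_weight n lam" and "integral_weight n \<mu>"
    and "(\<Sum>k=1..n. ls k) = l"
    and "\<exists>c. \<forall>k\<in>{1..n}. lam k - \<mu> k = of_nat (ls k) + c"
    and "is_verma n scale act v \<mu>"
  shows "\<forall>i\<in>{1..l}. \<forall>m\<in>{1..n}.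
           (\<Sum>k=1..<m. ls k) < i \<and> i \<le> (\<Sum>k=1..m. ls k) \<longrightarrow>
           coinv_eq n l scale act
             (yop n l scale act i (u_vec n ls v))
             (scaleT scale (\<mu> m + rho n m + of_nat i - of_nat (\<Sum>k=1..<m. ls k) - 1)
                (u_vec n ls v))"
proof (intro ballI impI)
  fix i m assume i: "i \<in> {1..l}" and m: "m \<in> {1..n}"
    and h: "(\<Sum>k=1..<m. ls k) < i \<and> i \<le> (\<Sum>k=1..m. ls k)"
  have V: "sl_rep n scale act" "\<And>a b. a \<in> {1..n} \<Longrightarrow> b \<in> {1..n} \<Longrightarrow> a < b \<Longrightarrow> act (E a b) v = 0"
    "\<And>d. diag d \<in> sl n \<Longrightarrow> act (diag d) v = scale (\<Sum>k=1..n. d k * \<mu> k) v"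
    using assms(7) unfolding is_verma_def by auto
  have wt: "(\<Sum>k=1..n. \<mu> k) = 0" using assms(4) by (simp add: integral_weight_def weight_def)
  interpret ctx2 n l scale act v \<mu>
    by unfold_locales (use V wt assms(1) in auto)
  have u: "u_vec n ls v = sng (std_word n ls) v" by (simp add: u_vec_def sng_def fun_eq_iff)
  show "coinv_eq n l scale act (yop n l scale act i (u_vec n ls v))
     (scaleT scale (\<mu> m + rho n m + of_nat i - of_nat (\<Sum>k=1..<m. ls k) - 1) (u_vec n ls v))"
    unfolding coinv_eq_def nminus_image_def u main_eq[OF assms(5) i m conjunct1[OF h] conjunct2[OF h]]
  proof (intro T.span_sum T.span_base)
    fix b assume b: "b \<in> {1..<m}"
    then show "actT n l scale act (E m b) (sng ((std_word n ls)[i-1:=b]) v) \<in>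
      {actT n l scale act (E a b) F | a b F. a \<in> {1..n} \<and> b \<in> {1..n} \<and> b < a}"
    proof (intro CollectI exI conjI)
      show "actT n l scale act (E m b) (sng ((std_word n ls)[i-1:=b]) v) =
        actT n l scale act (E m b) (sng ((std_word n ls)[i-1:=b]) v)" ..
    qed (use b m in auto)
  qed
qed

end
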